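(* For every function $f : X \to \mathbb{R}$ (with no measurability assumption), the game $\Gamma'(f)$ is determined.
   Context: Let $A$ be a non-empty countable set and $T$ a pruned tree on $A$ (a set of finite sequences of elements of $A$, closed under initial segments, in which every sequence has a proper extension in $T$). Let $X$ be the set of infinite branches of $T$, with the topology generated by the cylinder sets $O(s) = \{x \in X : s \text{ is an initial segment of } x\}$, $s \in T$. The game $\Gamma'(f)$: Player I and Player II alternate, Player I moving first; Player I plays $x_0, x_1, \dots \in A$ subject to $(x_0,\dots,x_t) \in T$ for all $t$, and after each move $x_t$ Player II plays a pair of reals $(v_t,w_t)$; Player II wins iff $f(x_0,x_1,\dots) = \limsup_t v_t = \liminf_t w_t$; otherwise Player I wins. Determined means one of the players has a winning strategy. *)

theory Defs
  imports "HOL-Analysis.Analysis" "HOL-Library.Liminf_Limsup"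
begin

definition prefix_seq :: "(nat \<Rightarrow> 'a) \<Rightarrow> nat \<Rightarrow> 'a list" where
  "prefix_seq x n = map x [0..<n]"

definition is_tree :: "'a set \<Rightarrow> 'a list set \<Rightarrow> bool" where
  "is_tree A T \<longleftrightarrow> T \<subseteq> lists A \<and> T \<noteq> {} \<and>
     (\<forall>s \<in> T. \<forall>n. take n s \<in> T)"

definition pruned_tree :: "'a set \<Rightarrow> 'a list set \<Rightarrow> bool" where
  "pruned_tree A T \<longleftrightarrow> is_tree A T \<and>
     (\<forall>s \<in> T. \<exists>t \<in> T. length s < length t \<and> take (length s) t = s)"

definition branches :: "'a list set \<Rightarrow> (nat \<Rightarrow> 'a) set" where
  "branches T = {x. \<forall>n. prefix_seq x n \<in> T}"

definition II_wins :: "((nat \<Rightarrow> 'a) \<Rightarrow> real) \<Rightarrow> (nat \<Rightarrow> 'a) \<Rightarrow> (nat \<Rightarrow> real \<times> real) \<Rightarrow> bool" where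
  "II_wins f x vw \<longleftrightarrow>
     ereal (f x) = limsup (\<lambda>t. ereal (fst (vw t))) \<and>
     ereal (f x) = liminf (\<lambda>t. ereal (snd (vw t)))"

text \<open>A strategy for Player I maps the history (x_0..x_{t-1}; (v_0,w_0)..(v_{t-1},w_{t-1}))
 to the next move x_t.  A strategy for Player II maps the history
 (x_0..x_t; (v_0,w_0)..(v_{t-1},w_{t-1})) to the move (v_t,w_t).\<close>
type_synonym 'a stratI = "'a list \<Rightarrow> (real \<times> real) list \<Rightarrow> 'a"
type_synonym 'a stratII = "'a list \<Rightarrow> (real \<times> real) list \<Rightarrow> real \<times> real"

definition winning_I :: "'a list set \<Rightarrow> ((nat \<Rightarrow> 'a) \<Rightarrow> real) \<Rightarrow> 'a stratI \<Rightarrow> bool" where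
  "winning_I T f \<sigma> \<longleftrightarrow>
     (\<forall>x vw. (\<forall>t. x t = \<sigma> (prefix_seq x t) (prefix_seq vw t)) \<longrightarrow>
        x \<in> branches T \<and> \<not> II_wins f x vw)"

definition winning_II :: "'a list set \<Rightarrow> ((nat \<Rightarrow> 'a) \<Rightarrow> real) \<Rightarrow> 'a stratII \<Rightarrow> bool" where
  "winning_II T f \<tau> \<longleftrightarrow>
     (\<forall>x vw. x \<in> branches T \<longrightarrow>
        (\<forall>t. vw t = \<tau> (prefix_seq x (Suc t)) (prefix_seq vw t)) \<longrightarrow>
        II_wins f x vw)"

definition determined_Gamma' :: "'a list set \<Rightarrow> ((nat \<Rightarrow> 'a) \<Rightarrow> real) \<Rightarrow> bool" where
  "determined_Gamma' T f \<longleftrightarrow> (\<exists>\<sigma>. winning_I T f \<sigma>) \<or> (\<exists>\<tau>. winning_II T f \<tau>)"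

end

theory Submission
  imports Defs
begin


lemma prefix_seq_Suc: "prefix_seq x (Suc n) = prefix_seq x n @ [x n]"
  by (simp add: prefix_seq_def)

lemma length_prefix_seq[simp]: "length (prefix_seq x n) = n"
  by (simp add: prefix_seq_def)

lemma nth_prefix_seq[simp]: "i < n \<Longrightarrow> prefix_seq x n ! i = x i"
  by (simp add: prefix_seq_def)

lemma prefix_seq_eq_iff: "prefix_seq x n = prefix_seq y n \<longleftrightarrow> (\<forall>i<n. x i = y i)"
  by (auto simp: prefix_seq_def)

lemma prefix_seq_mono: "prefix_seq x n = prefix_seq y n \<Longrightarrow> m \<le> n \<Longrightarrow> prefix_seq x m = prefix_seq y m"
  by (auto simp: prefix_seq_eq_iff)

definition dense_in :: "(nat \<Rightarrow> 'a) set \<Rightarrow> (nat \<Rightarrow> 'a) set \<Rightarrow> bool" where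
  "dense_in P Y \<longleftrightarrow> (\<forall>x\<in>P. \<forall>n. \<exists>y\<in>P. prefix_seq y n = prefix_seq x n \<and> y \<in> Y)"

definition pickA :: "(nat \<Rightarrow> 'a) set \<Rightarrow> real \<Rightarrow> ((nat \<Rightarrow> 'a) \<Rightarrow> real) \<Rightarrow> 'a list \<Rightarrow> (nat \<Rightarrow> 'a)" where
  "pickA P \<alpha> f s = (SOME y. y \<in> P \<and> prefix_seq y (length s) = s \<and> f y < \<alpha>)"
definition pickB :: "(nat \<Rightarrow> 'a) set \<Rightarrow> real \<Rightarrow> ((nat \<Rightarrow> 'a) \<Rightarrow> real) \<Rightarrow> 'a list \<Rightarrow> (nat \<Rightarrow> 'a)" where
  "pickB P \<beta> f s = (SOME y. y \<in> P \<and> prefix_seq y (length s) = s \<and> f y > \<beta>)"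

primrec stt :: "(nat \<Rightarrow> 'a) set \<Rightarrow> real \<Rightarrow> real \<Rightarrow> ((nat \<Rightarrow> 'a) \<Rightarrow> real) \<Rightarrow> nat \<Rightarrow> (nat \<Rightarrow> 'a) \<Rightarrow> (nat \<Rightarrow> real \<times> real) \<Rightarrow> bool \<times> (nat \<Rightarrow> 'a)" where
  "stt P \<alpha> \<beta> f 0 x vw = (True, pickA P \<alpha> f [])"
| "stt P \<alpha> \<beta> f (Suc t) x vw = (case stt P \<alpha> \<beta> f t x vw of (ph, y) \<Rightarrow>
     if ph \<and> snd (vw t) < \<alpha> then (False, pickB P \<beta> f (prefix_seq x (Suc t)))
     else if \<not> ph \<and> fst (vw t) > \<beta> then (True, pickA P \<alpha> f (prefix_seq x (Suc t)))
     else (ph, y))"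

lemma stt_dep: "(\<forall>i<t. x i = x' i) \<Longrightarrow> (\<forall>i<t. vw i = vw' i) \<Longrightarrow> stt P \<alpha> \<beta> f t x vw = stt P \<alpha> \<beta> f t x' vw'"
proof (induction t)
  case 0 then show ?case by simp
next
  case (Suc t)
  have "prefix_seq x (Suc t) = prefix_seq x' (Suc t)" using Suc.prems by (simp add: prefix_seq_eq_iff)
  moreover have "stt P \<alpha> \<beta> f t x vw = stt P \<alpha> \<beta> f t x' vw'" using Suc by simp
  moreover have "vw t = vw' t" using Suc.prems by simp
  ultimately show ?case by (simp only: stt.simps)
qed

lemma pickA_prop:
  assumes "dense_in P {y. f y < \<alpha>}" "p \<in> P" "prefix_seq p (length s) = s"
  shows "pickA P \<alpha> f s \<in> P \<and> prefix_seq (pickA P \<alpha> f s) (length s) = s \<and> f (pickA P \<alpha> f s) < \<alpha>"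
proof -
  obtain y where "y \<in> P" "prefix_seq y (length s) = prefix_seq p (length s)" "f y < \<alpha>"
    using assms(1,2) unfolding dense_in_def by blast
  then show ?thesis unfolding pickA_def using assms(3) by (rule_tac someI[of _ y]) auto
qed

lemma pickB_prop:
  assumes "dense_in P {y. f y > \<beta>}" "p \<in> P" "prefix_seq p (length s) = s"
  shows "pickB P \<beta> f s \<in> P \<and> prefix_seq (pickB P \<beta> f s) (length s) = s \<and> f (pickB P \<beta> f s) > \<beta>"
proof -
  obtain y where "y \<in> P" "prefix_seq y (length s) = prefix_seq p (length s)" "f y > \<beta>"
    using assms(1,2) unfolding dense_in_def by blast
  then show ?thesis unfolding pickB_def using assms(3) by (rule_tac someI[of _ y]) auto
qed

lemma stt_inv:
  assumes dA: "dense_in P {y. f y < \<alpha>}" and dB: "dense_in P {y. f y > \<beta>}" and ne: "P \<noteq> {}"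
    and cons: "\<forall>t. x t = snd (stt P \<alpha> \<beta> f t x vw) t"
  shows "snd (stt P \<alpha> \<beta> f t x vw) \<in> P \<and> prefix_seq (snd (stt P \<alpha> \<beta> f t x vw)) t = prefix_seq x t
    \<and> (fst (stt P \<alpha> \<beta> f t x vw) \<longrightarrow> f (snd (stt P \<alpha> \<beta> f t x vw)) < \<alpha>)
    \<and> (\<not> fst (stt P \<alpha> \<beta> f t x vw) \<longrightarrow> f (snd (stt P \<alpha> \<beta> f t x vw)) > \<beta>)"
proof (induction t)
  case 0
  obtain p where "p \<in> P" using ne by blast
  then show ?case using pickA_prop[OF dA, of p "[]"] by (simp add: prefix_seq_def)
next
  case (Suc t)
  obtain ph y where st: "stt P \<alpha> \<beta> f t x vw = (ph, y)" by force
  have yP: "y \<in> P" and yp: "prefix_seq y t = prefix_seq x t" using Suc st by auto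
  have "x t = y t" using cons st by (metis snd_conv)
  then have yp2: "prefix_seq y (Suc t) = prefix_seq x (Suc t)" using yp by (simp add: prefix_seq_Suc)
  show ?case
  proof (cases "ph \<and> snd (vw t) < \<alpha>")
    case True
    then show ?thesis using st pickB_prop[OF dB yP, of "prefix_seq x (Suc t)"] yp2 by simp
  next
    case F1: False
    show ?thesis
    proof (cases "\<not> ph \<and> fst (vw t) > \<beta>")
      case True
      then show ?thesis using st F1 pickA_prop[OF dA yP, of "prefix_seq x (Suc t)"] yp2 by simp
    next
      case False
      then show ?thesis using st F1 Suc.IH yP yp2 by auto
    qed
  qed
qed

lemma switch_exists:
  fixes ph :: "nat \<Rightarrow> bool"
  shows "t1 \<le> t2 \<Longrightarrow> ph t1 \<Longrightarrow> \<not> ph t2 \<Longrightarrow> \<exists>t. t1 \<le> t \<and> t < t2 \<and> ph t \<and> \<not> ph (Suc t)"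
proof (induction t2)
  case 0 then show ?case by auto
next
  case (Suc t2)
  show ?case
  proof (cases "ph t2")
    case True then show ?thesis using Suc by (metis le_SucE lessI)
  next
    case False
    then have "t1 \<le> t2" using Suc by (metis le_SucE)
    then show ?thesis using Suc.IH Suc.prems False by (meson less_Suc_eq)
  qed
qed

lemma I_wins:
  assumes PX: "P \<subseteq> branches T" and ne: "P \<noteq> {}" and ab: "\<alpha> < \<beta>"
    and dA: "dense_in P {y. f y < \<alpha>}" and dB: "dense_in P {y. f y > \<beta>}"
  shows "winning_I T f (\<lambda>xs vws. snd (stt P \<alpha> \<beta> f (length xs) (\<lambda>i. xs!i) (\<lambda>i. vws!i)) (length xs))"
  unfolding winning_I_def
proof (intro allI impI)
  fix x vw
  assume c: "\<forall>t. x t = snd (stt P \<alpha> \<beta> f (length (prefix_seq x t)) (\<lambda>i. prefix_seq x t ! i) (\<lambda>i. prefix_seq vw t ! i)) (length (prefix_seq x t))"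
  define ph where "ph t = fst (stt P \<alpha> \<beta> f t x vw)" for t
  define tg where "tg t = snd (stt P \<alpha> \<beta> f t x vw)" for t
  have cons: "\<forall>t. x t = snd (stt P \<alpha> \<beta> f t x vw) t"
  proof
    fix t
    have "stt P \<alpha> \<beta> f t (\<lambda>i. prefix_seq x t ! i) (\<lambda>i. prefix_seq vw t ! i) = stt P \<alpha> \<beta> f t x vw"
      by (rule stt_dep) auto
    then show "x t = snd (stt P \<alpha> \<beta> f t x vw) t" using c by (metis length_prefix_seq)
  qed
  note inv = stt_inv[OF dA dB ne cons]
  have tgP: "tg t \<in> P" and tgp: "prefix_seq (tg t) t = prefix_seq x t"
    and phA: "ph t \<Longrightarrow> f (tg t) < \<alpha>" and phB: "\<not> ph t \<Longrightarrow> f (tg t) > \<beta>" for t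
    using inv[of t] unfolding ph_def tg_def by auto
  have trs: "(ph t \<and> \<not> ph (Suc t) \<longrightarrow> snd (vw t) < \<alpha>) \<and> (\<not> ph t \<and> ph (Suc t) \<longrightarrow> fst (vw t) > \<beta>)
     \<and> (ph t \<and> ph (Suc t) \<longrightarrow> \<not> snd (vw t) < \<alpha> \<and> tg (Suc t) = tg t)
     \<and> (\<not> ph t \<and> \<not> ph (Suc t) \<longrightarrow> \<not> fst (vw t) > \<beta> \<and> tg (Suc t) = tg t)" for t
  proof -
    obtain p y where st: "stt P \<alpha> \<beta> f t x vw = (p, y)" by force
    show ?thesis unfolding ph_def tg_def using st by auto
  qed
  show "x \<in> branches T \<and> \<not> II_wins f x vw"
  proof
    show "x \<in> branches T" unfolding branches_def
    proof (intro CollectI allI)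
      fix n
      have "tg n \<in> branches T" using tgP PX by blast
      then show "prefix_seq x n \<in> T" using tgp[of n] unfolding branches_def by (metis mem_Collect_eq)
    qed
  next
    show "\<not> II_wins f x vw"
    proof
      assume W: "II_wins f x vw"
      then have Wl: "ereal (f x) = liminf (\<lambda>t. ereal (snd (vw t)))"
        and Ws: "ereal (f x) = limsup (\<lambda>t. ereal (fst (vw t)))" unfolding II_wins_def by auto
      show False
      proof (cases "\<exists>T0. \<forall>t\<ge>T0. ph t = ph T0")
        case True
        then obtain T0 where T0: "\<forall>t\<ge>T0. ph t = ph T0" by blast
        have tgc: "t \<ge> T0 \<Longrightarrow> tg t = tg T0" for t
        proof (induction t rule: dec_induct)
          case base then show ?case by simp
        next
          case (step t)
          have "ph t = ph T0" "ph (Suc t) = ph T0" using T0[rule_format, of t] T0[rule_format, of "Suc t"] step(1) by auto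
          then show ?case using trs[of t] step by (cases "ph T0") auto
        qed
        have xeq: "x = tg T0"
        proof
          fix i
          define t where "t = max T0 (Suc i)"
          have "prefix_seq x t = prefix_seq (tg T0) t" using tgp[of t] tgc[of t] t_def by simp
          then show "x i = tg T0 i" unfolding prefix_seq_eq_iff t_def by auto
        qed
        show False
        proof (cases "ph T0")
          case True
          have "\<forall>t\<ge>T0. \<alpha> \<le> snd (vw t)"
          proof (intro allI impI)
            fix t assume "T0 \<le> t"
            then have "ph t" "ph (Suc t)" using T0[rule_format, of t] T0[rule_format, of "Suc t"] True by auto
            then show "\<alpha> \<le> snd (vw t)" using trs[of t] by simp
          qed
          then have "eventually (\<lambda>t. ereal \<alpha> \<le> ereal (snd (vw t))) sequentially"
            unfolding eventually_sequentially by auto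
          then have "ereal \<alpha> \<le> liminf (\<lambda>t. ereal (snd (vw t)))" by (rule Liminf_bounded)
          then have "ereal \<alpha> \<le> ereal (f x)" using Wl by simp
          then show False using phA[of T0] True xeq by simp
        next
          case False
          have "\<forall>t\<ge>T0. fst (vw t) \<le> \<beta>"
          proof (intro allI impI)
            fix t assume "T0 \<le> t"
            then have "\<not> ph t" "\<not> ph (Suc t)" using T0[rule_format, of t] T0[rule_format, of "Suc t"] False by auto
            then show "fst (vw t) \<le> \<beta>" using trs[of t] by simp
          qed
          then have "eventually (\<lambda>t. ereal (fst (vw t)) \<le> ereal \<beta>) sequentially"
            unfolding eventually_sequentially by auto
          then have "limsup (\<lambda>t. ereal (fst (vw t))) \<le> ereal \<beta>" by (rule Limsup_bounded)
          then have "ereal (f x) \<le> ereal \<beta>" using Ws by simp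
          then show False using phB[of T0] False xeq by simp
        qed
      next
        case False
        then have H: "\<forall>T0. \<exists>t\<ge>T0. ph t \<noteq> ph T0" by blast
        have fA: "\<exists>t\<ge>N. snd (vw t) < \<alpha>" for N
        proof -
          obtain t1 where t1: "t1 \<ge> N" "ph t1"
            using H[rule_format, of N] by (cases "ph N") auto
          obtain t2 where t2: "t2 \<ge> t1" "\<not> ph t2" using H[rule_format, of t1] t1(2) by auto
          obtain t where "t1 \<le> t" "ph t" "\<not> ph (Suc t)" using switch_exists[of t1 t2 ph] t1 t2 by blast
          then show ?thesis using trs[of t] t1 by (meson order_trans)
        qed
        have fB: "\<exists>t\<ge>N. fst (vw t) > \<beta>" for N
        proof -
          obtain t1 where t1: "t1 \<ge> N" "\<not> ph t1"
            using H[rule_format, of N] by (cases "ph N") auto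
          obtain t2 where t2: "t2 \<ge> t1" "ph t2" using H[rule_format, of t1] t1(2) by auto
          obtain t where "t1 \<le> t" "\<not> ph t" "ph (Suc t)" using switch_exists[of t1 t2 "\<lambda>t. \<not> ph t"] t1 t2 by blast
          then show ?thesis using trs[of t] t1 by (meson order_trans)
        qed
        have "f x \<le> \<alpha>"
        proof (rule ccontr)
          assume "\<not> f x \<le> \<alpha>"
          then have "ereal \<alpha> < ereal (f x)" by simp
          moreover have "ereal (f x) \<le> liminf (\<lambda>t. ereal (snd (vw t)))" using Wl by simp
          ultimately have "eventually (\<lambda>t. ereal \<alpha> < ereal (snd (vw t))) sequentially"
            unfolding le_Liminf_iff by blast
          then obtain N where "\<forall>t\<ge>N. \<alpha> < snd (vw t)" unfolding eventually_sequentially by auto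
          then show False using fA[of N] by force
        qed
        moreover have "f x \<ge> \<beta>"
        proof (rule ccontr)
          assume "\<not> f x \<ge> \<beta>"
          then have "ereal \<beta> > ereal (f x)" by simp
          moreover have "ereal (f x) \<ge> limsup (\<lambda>t. ereal (fst (vw t)))" using Ws by simp
          ultimately have "eventually (\<lambda>t. ereal \<beta> > ereal (fst (vw t))) sequentially"
            unfolding Limsup_le_iff by blast
          then obtain N where "\<forall>t\<ge>N. \<beta> > fst (vw t)" unfolding eventually_sequentially by auto
          then show False using fB[of N] by force
        qed
        ultimately show False using ab by simp
      qed
    qed
  qed
qed



inductive_set twr :: "'b set \<Rightarrow> ('b set \<Rightarrow> 'b set) \<Rightarrow> 'b set set" for X D where
  tw_step: "P \<in> twr X D \<Longrightarrow> D P \<in> twr X D"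
| tw_inter: "\<forall>K\<in>C. K \<in> twr X D \<Longrightarrow> X \<inter> \<Inter>C \<in> twr X D"

lemma twr_sub: "P \<in> twr X D \<Longrightarrow> (\<And>Q. D Q \<subseteq> Q) \<Longrightarrow> P \<subseteq> X"
  by (induction rule: twr.induct) blast+

lemma twr_lemma1:
  assumes Dsub: "\<And>Q. D Q \<subseteq> Q" and M: "M \<in> twr X D"
    and H: "\<forall>K\<in>twr X D. M \<subseteq> K \<longrightarrow> K = M \<or> M \<subseteq> D K"
  shows "N \<in> twr X D \<Longrightarrow> M \<subseteq> N \<or> N \<subseteq> D M"
proof (induction rule: twr.induct)
  case (tw_step N0)
  from tw_step.IH show ?case
  proof
    assume "M \<subseteq> N0"
    then show ?thesis using H tw_step.hyps by blast
  next
    assume "N0 \<subseteq> D M"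
    then show ?thesis using Dsub[of N0] by blast
  qed
next
  case (tw_inter C)
  show ?case
  proof (cases "\<forall>K\<in>C. M \<subseteq> K")
    case True
    then show ?thesis using twr_sub[OF M Dsub] by blast
  next
    case False
    then obtain K where "K \<in> C" "\<not> M \<subseteq> K" by blast
    then have "K \<subseteq> D M" using tw_inter.IH by blast
    then show ?thesis using \<open>K \<in> C\<close> by blast
  qed
qed

lemma twr_lemma2:
  assumes Dsub: "\<And>Q. D Q \<subseteq> Q"
  shows "M \<in> twr X D \<Longrightarrow> \<forall>N\<in>twr X D. M \<subseteq> N \<longrightarrow> N = M \<or> M \<subseteq> D N"
proof (induction rule: twr.induct)
  case (tw_step M0)
  show ?case
  proof (intro ballI impI)
    fix N assume N: "N \<in> twr X D" and sub: "D M0 \<subseteq> N"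
    have "M0 \<subseteq> N \<or> N \<subseteq> D M0" using twr_lemma1[OF Dsub tw_step.hyps tw_step.IH N] .
    then show "N = D M0 \<or> D M0 \<subseteq> D N"
    proof
      assume "M0 \<subseteq> N"
      then have "N = M0 \<or> M0 \<subseteq> D N" using tw_step.IH N by blast
      then show ?thesis using Dsub[of M0] by blast
    next
      assume "N \<subseteq> D M0" then show ?thesis using sub by blast
    qed
  qed
next
  case (tw_inter C)
  show ?case
  proof (intro ballI impI)
    fix N assume N: "N \<in> twr X D" and sub: "X \<inter> \<Inter>C \<subseteq> N"
    show "N = X \<inter> \<Inter>C \<or> X \<inter> \<Inter>C \<subseteq> D N"
    proof (cases "\<forall>K\<in>C. N \<subseteq> K")
      case True
      then have "N \<subseteq> X \<inter> \<Inter>C" using twr_sub[OF N Dsub] by blast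
      then show ?thesis using sub by blast
    next
      case False
      then obtain K where K: "K \<in> C" "\<not> N \<subseteq> K" by blast
      have KT: "K \<in> twr X D" using K tw_inter.IH by blast
      have HK: "\<forall>N\<in>twr X D. K \<subseteq> N \<longrightarrow> N = K \<or> K \<subseteq> D N" using tw_inter.IH K by blast
      have "K \<subseteq> N \<or> N \<subseteq> D K" using twr_lemma1[OF Dsub KT HK N] .
      then have "K \<subseteq> N" using K(2) Dsub[of K] by blast
      then have "K \<subseteq> D N" using HK N K(2) by blast
      then show ?thesis using K(1) by blast
    qed
  qed
qed

lemma twr_linear:
  assumes Dsub: "\<And>Q. D Q \<subseteq> Q" and M: "M \<in> twr X D" and N: "N \<in> twr X D"
  shows "M \<subseteq> N \<or> N \<subseteq> M"
  using twr_lemma1[OF Dsub M twr_lemma2[OF Dsub M] N] Dsub[of M] by blast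



definition spread_ok :: "((nat \<Rightarrow> 'a) \<Rightarrow> real) \<Rightarrow> real \<Rightarrow> (nat \<Rightarrow> 'a) set \<Rightarrow> (nat \<Rightarrow> 'a) \<Rightarrow> nat \<Rightarrow> bool" where
  "spread_ok g \<epsilon> P x n \<longleftrightarrow> (\<forall>y\<in>P. \<forall>z\<in>P. prefix_seq y n = prefix_seq x n \<longrightarrow> prefix_seq z n = prefix_seq x n \<longrightarrow> \<bar>g y - g z\<bar> \<le> \<epsilon>)"

definition Dop :: "((nat \<Rightarrow> 'a) \<Rightarrow> real) \<Rightarrow> real \<Rightarrow> (nat \<Rightarrow> 'a) set \<Rightarrow> (nat \<Rightarrow> 'a) set" where
  "Dop g \<epsilon> P = {x\<in>P. \<not> (\<exists>n. spread_ok g \<epsilon> P x n)}"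

definition cyl :: "(nat \<Rightarrow> 'a) set \<Rightarrow> 'a list \<Rightarrow> (nat \<Rightarrow> 'a) set" where
  "cyl X s = {y\<in>X. prefix_seq y (length s) = s}"

definition Pnode :: "(nat \<Rightarrow> 'a) set \<Rightarrow> ((nat \<Rightarrow> 'a) \<Rightarrow> real) \<Rightarrow> real \<Rightarrow> 'a list \<Rightarrow> (nat \<Rightarrow> 'a) set" where
  "Pnode X g \<epsilon> s = (SOME P. P \<in> twr X (Dop g \<epsilon>) \<and> cyl X s \<inter> P \<noteq> {} \<and> cyl X s \<inter> Dop g \<epsilon> P = {})"

definition hval :: "(nat \<Rightarrow> 'a) set \<Rightarrow> ((nat \<Rightarrow> 'a) \<Rightarrow> real) \<Rightarrow> real \<Rightarrow> 'a list \<Rightarrow> real" where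
  "hval X g \<epsilon> s = g (SOME y. y \<in> cyl X s \<inter> Pnode X g \<epsilon> s)"

lemma Dop_sub: "Dop g \<epsilon> Q \<subseteq> Q" unfolding Dop_def by blast

lemma hval_conv:
  assumes frag: "\<forall>P. P \<subseteq> X \<and> P \<noteq> {} \<longrightarrow> (\<exists>x\<in>P. \<exists>n. spread_ok g \<epsilon> P x n)" and x: "x \<in> X"
  shows "\<exists>N. \<forall>t\<ge>N. \<bar>hval X g \<epsilon> (prefix_seq x t) - g x\<bar> \<le> \<epsilon>"
proof -
  define D where "D = Dop g \<epsilon>"
  have Dsub: "D Q \<subseteq> Q" for Q unfolding D_def by (rule Dop_sub)
  define Q where "Q = X \<inter> \<Inter>{P\<in>twr X D. x\<in>P}"
  have QT: "Q \<in> twr X D" unfolding Q_def by (rule tw_inter) blast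
  have xQ: "x \<in> Q" unfolding Q_def using x by blast
  have QX: "Q \<subseteq> X" unfolding Q_def by blast
  have "x \<notin> D Q"
  proof
    assume "x \<in> D Q"
    moreover have "D Q \<in> twr X D" using QT by (rule tw_step)
    ultimately have "Q \<subseteq> D Q" unfolding Q_def by blast
    then have DQ: "D Q = Q" using Dsub[of Q] by blast
    obtain x0 n where "x0 \<in> Q" "spread_ok g \<epsilon> Q x0 n" using frag QX xQ by blast
    then have "x0 \<notin> D Q" unfolding D_def Dop_def by blast
    then show False using DQ \<open>x0 \<in> Q\<close> by blast
  qed
  then obtain n where n: "spread_ok g \<epsilon> Q x n" using xQ unfolding D_def Dop_def by blast
  show ?thesis
  proof (intro exI allI impI)
    fix t assume tn: "n \<le> t"
    define s where "s = prefix_seq x t"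
    have ls: "length s = t" unfolding s_def by simp
    have A: "x \<in> cyl X s \<inter> Q" using xQ x unfolding cyl_def ls s_def by simp
    have B: "cyl X s \<inter> D Q = {}"
    proof (rule ccontr)
      assume "cyl X s \<inter> D Q \<noteq> {}"
      then obtain z where z: "z \<in> cyl X s" "z \<in> D Q" by blast
      then have zQ: "z \<in> Q" using Dsub by blast
      have "prefix_seq z t = prefix_seq x t" using z(1) unfolding cyl_def ls s_def by simp
      then have zx: "prefix_seq z n = prefix_seq x n" using tn prefix_seq_mono by blast
      have "spread_ok g \<epsilon> Q z n" using n zx unfolding spread_ok_def by simp
      then show False using z(2) unfolding D_def Dop_def by blast
    qed
    have uniq: "P = Q" if P: "P \<in> twr X D" "cyl X s \<inter> P \<noteq> {}" "cyl X s \<inter> D P = {}" for P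
    proof -
      have "P \<subseteq> Q \<or> Q \<subseteq> P" using twr_linear[OF Dsub P(1) QT] .
      then show ?thesis
      proof
        assume "P \<subseteq> Q"
        then have "Q = P \<or> P \<subseteq> D Q" using twr_lemma2[OF Dsub P(1)] QT by blast
        then show ?thesis using P(2) B by blast
      next
        assume "Q \<subseteq> P"
        then have "P = Q \<or> Q \<subseteq> D P" using twr_lemma2[OF Dsub QT] P(1) by blast
        then show ?thesis using P(3) A by blast
      qed
    qed
    have "Pnode X g \<epsilon> s \<in> twr X D \<and> cyl X s \<inter> Pnode X g \<epsilon> s \<noteq> {} \<and> cyl X s \<inter> D (Pnode X g \<epsilon> s) = {}"
      unfolding Pnode_def D_def[symmetric] by (rule someI[of _ Q]) (use QT A B in blast)
    then have PQ: "Pnode X g \<epsilon> s = Q" using uniq by blast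
    define y where "y = (SOME y. y \<in> cyl X s \<inter> Q)"
    have "y \<in> cyl X s \<inter> Q" unfolding y_def using A by (rule someI[of "\<lambda>y. y \<in> cyl X s \<inter> Q"])
    then have yQ: "y \<in> Q" and "prefix_seq y t = prefix_seq x t" unfolding cyl_def ls s_def by auto
    then have yx: "prefix_seq y n = prefix_seq x n" using tn prefix_seq_mono by blast
    have "\<bar>g y - g x\<bar> \<le> \<epsilon>" using n yQ xQ yx unfolding spread_ok_def by blast
    moreover have "hval X g \<epsilon> (prefix_seq x t) = g y" unfolding hval_def y_def PQ s_def[symmetric] ..
    ultimately show "\<bar>hval X g \<epsilon> (prefix_seq x t) - g x\<bar> \<le> \<epsilon>" by simp
  qed
qed



definition obstr :: "'a list set \<Rightarrow> ((nat \<Rightarrow> 'a) \<Rightarrow> real) \<Rightarrow> bool" where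
  "obstr T f \<longleftrightarrow> (\<exists>P \<alpha> \<beta>. P \<subseteq> branches T \<and> P \<noteq> {} \<and> \<alpha> < \<beta> \<and> dense_in P {y. f y < \<alpha>} \<and> dense_in P {y. f y > \<beta>})"

lemma split_lemma:
  assumes nob: "\<not> obstr T f" and cd: "c < d" and P: "P \<subseteq> branches T" "P \<noteq> {}"
  shows "\<exists>x\<in>P. \<exists>n. (\<forall>y\<in>P. prefix_seq y n = prefix_seq x n \<longrightarrow> c \<le> arctan (f y))
                \<or> (\<forall>y\<in>P. prefix_seq y n = prefix_seq x n \<longrightarrow> arctan (f y) \<le> d)"
proof (cases "c \<le> - (pi/2)")
  case True
  obtain x where "x \<in> P" using P by blast
  moreover have "c \<le> arctan (f y)" for y using True arctan_lbound[of "f y"] by linarith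
  ultimately show ?thesis by blast
next
  case c1: False
  show ?thesis
  proof (cases "d \<ge> pi/2")
    case True
    obtain x where "x \<in> P" using P by blast
    moreover have "arctan (f y) \<le> d" for y using True arctan_ubound[of "f y"] by linarith
    ultimately show ?thesis by blast
  next
    case d1: False
    have tcd: "tan c < tan d" using c1 d1 cd by (intro tan_monotone) auto
    have "\<not> dense_in P {y. f y < tan c} \<or> \<not> dense_in P {y. f y > tan d}"
      using nob tcd P unfolding obstr_def by blast
    then show ?thesis
    proof
      assume "\<not> dense_in P {y. f y < tan c}"
      then obtain x n where x: "x \<in> P" and H: "\<forall>y\<in>P. prefix_seq y n = prefix_seq x n \<longrightarrow> \<not> f y < tan c"
        unfolding dense_in_def by blast
      have "c \<le> arctan (f y)" if "y \<in> P" "prefix_seq y n = prefix_seq x n" for y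
      proof -
        have "tan c \<le> f y" using H that by force
        then have "arctan (tan c) \<le> arctan (f y)" by (simp add: arctan_le_iff)
        then show ?thesis using arctan_tan[of c] c1 d1 cd by simp
      qed
      then show ?thesis using x by blast
    next
      assume "\<not> dense_in P {y. f y > tan d}"
      then obtain x n where x: "x \<in> P" and H: "\<forall>y\<in>P. prefix_seq y n = prefix_seq x n \<longrightarrow> \<not> f y > tan d"
        unfolding dense_in_def by blast
      have "arctan (f y) \<le> d" if "y \<in> P" "prefix_seq y n = prefix_seq x n" for y
      proof -
        have "f y \<le> tan d" using H that by force
        then have "arctan (f y) \<le> arctan (tan d)" by (simp add: arctan_le_iff)
        then show ?thesis using arctan_tan[of d] c1 d1 cd by simp
      qed
      then show ?thesis using x by blast
    qed
  qed
qed

lemma frag_lemma: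
  assumes nob: "\<not> obstr T f" and e: "\<epsilon> > 0" and P: "P \<subseteq> branches T" "P \<noteq> {}"
  shows "\<exists>x\<in>P. \<exists>n. spread_ok (\<lambda>x. arctan (f x)) \<epsilon> P x n"
proof -
  define g where "g x = arctan (f x)" for x
  define \<delta> where "\<delta> = \<epsilon> / 3"
  have dpos: "\<delta> > 0" using e unfolding \<delta>_def by simp
  define c where "c k = -2 + real k * \<delta>" for k
  have claim: "\<exists>x\<in>P. \<exists>n. \<forall>k<m. (\<forall>y\<in>P. prefix_seq y n = prefix_seq x n \<longrightarrow> c k \<le> g y)
        \<or> (\<forall>y\<in>P. prefix_seq y n = prefix_seq x n \<longrightarrow> g y \<le> c (Suc k))" for m
  proof (induction m)
    case 0 then show ?case using P by auto
  next
    case (Suc m)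
    then obtain x n where x: "x \<in> P" and old: "\<forall>k<m. (\<forall>y\<in>P. prefix_seq y n = prefix_seq x n \<longrightarrow> c k \<le> g y)
        \<or> (\<forall>y\<in>P. prefix_seq y n = prefix_seq x n \<longrightarrow> g y \<le> c (Suc k))" by blast
    define P' where "P' = {y\<in>P. prefix_seq y n = prefix_seq x n}"
    have P'1: "P' \<subseteq> branches T" "P' \<noteq> {}" using P x unfolding P'_def by auto
    have cc: "c m < c (Suc m)" unfolding c_def using dpos by (simp add: algebra_simps)
    obtain x' n' where x': "x' \<in> P'" and new: "(\<forall>y\<in>P'. prefix_seq y n' = prefix_seq x' n' \<longrightarrow> c m \<le> g y)
                \<or> (\<forall>y\<in>P'. prefix_seq y n' = prefix_seq x' n' \<longrightarrow> g y \<le> c (Suc m))"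
      using split_lemma[OF nob cc P'1] unfolding g_def by blast
    define n'' where "n'' = max n n'"
    have sub: "y \<in> P' \<and> prefix_seq y n' = prefix_seq x' n' \<and> prefix_seq y n = prefix_seq x n"
      if "y \<in> P" "prefix_seq y n'' = prefix_seq x' n''" for y
    proof -
      have a: "prefix_seq y n = prefix_seq x' n" "prefix_seq y n' = prefix_seq x' n'"
        using prefix_seq_mono[OF that(2)] n''_def by auto
      have "prefix_seq x' n = prefix_seq x n" using x' unfolding P'_def by simp
      then show ?thesis using a that(1) unfolding P'_def by simp
    qed
    show ?case
    proof (intro bexI exI allI impI)
      show "x' \<in> P" using x' unfolding P'_def by simp
      fix k assume "k < Suc m"
      then consider "k < m" | "k = m" by linarith
      then show "(\<forall>y\<in>P. prefix_seq y n'' = prefix_seq x' n'' \<longrightarrow> c k \<le> g y)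
        \<or> (\<forall>y\<in>P. prefix_seq y n'' = prefix_seq x' n'' \<longrightarrow> g y \<le> c (Suc k))"
      proof cases
        case 1
        then show ?thesis using old sub by blast
      next
        case 2
        then show ?thesis using new sub by blast
      qed
    qed
  qed
  define K where "K = nat \<lceil>4 / \<delta>\<rceil>"
  have cK: "c K \<ge> 2"
  proof -
    have "real K \<ge> 4 / \<delta>" unfolding K_def by linarith
    then have "real K * \<delta> \<ge> 4" using dpos by (simp add: field_simps)
    then show ?thesis unfolding c_def by simp
  qed
  obtain x n where x: "x \<in> P" and prp: "\<forall>k<K. (\<forall>y\<in>P. prefix_seq y n = prefix_seq x n \<longrightarrow> c k \<le> g y)
        \<or> (\<forall>y\<in>P. prefix_seq y n = prefix_seq x n \<longrightarrow> g y \<le> c (Suc k))" using claim by blast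
  have key: "g z \<le> g y + 2 * \<delta>" if y: "y \<in> P" "prefix_seq y n = prefix_seq x n"
    and z: "z \<in> P" "prefix_seq z n = prefix_seq x n" for y z
  proof (rule ccontr)
    assume nz: "\<not> g z \<le> g y + 2 * \<delta>"
    have gyb: "g y > -2" "g z < 2" unfolding g_def using arctan_lbound[of "f y"] arctan_ubound[of "f z"] pi_less_4 by linarith+
    define k where "k = nat \<lfloor>(g y + 2) / \<delta>\<rfloor> + 1"
    have fl: "\<lfloor>(g y + 2) / \<delta>\<rfloor> \<ge> 0" using gyb dpos by simp
    have rk: "real k = real_of_int \<lfloor>(g y + 2) / \<delta>\<rfloor> + 1" unfolding k_def using fl by simp
    have "(g y + 2) / \<delta> < real k" using rk by linarith
    then have ck: "c k > g y" unfolding c_def using dpos by (simp add: field_simps)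
    have "real k - 1 \<le> (g y + 2) / \<delta>" using rk by linarith
    then have "(real k - 1) * \<delta> \<le> g y + 2" using dpos by (simp add: field_simps)
    then have ck2: "c (Suc k) \<le> g y + 2 * \<delta>" unfolding c_def by (simp add: algebra_simps)
    have "c (Suc k) < c K" using ck2 nz gyb cK by linarith
    then have "real (Suc k) * \<delta> < real K * \<delta>" unfolding c_def by simp
    then have "Suc k < K" using dpos by (metis mult_less_cancel_right_pos of_nat_less_iff)
    then have "k < K" by simp
    then show False using prp ck ck2 nz y z by force
  qed
  have "spread_ok g \<epsilon> P x n" unfolding spread_ok_def
  proof (intro ballI impI)
    fix y z assume "y \<in> P" "z \<in> P" "prefix_seq y n = prefix_seq x n" "prefix_seq z n = prefix_seq x n"
    then have "g z \<le> g y + 2 * \<delta>" "g y \<le> g z + 2 * \<delta>" using key by blast+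
    then show "\<bar>g y - g z\<bar> \<le> \<epsilon>" unfolding \<delta>_def using e by linarith
  qed
  then show ?thesis using x unfolding g_def by blast
qed



definition epsm :: "nat \<Rightarrow> real" where "epsm m = 1 / (real m + 1)"

definition mmx :: "(nat \<Rightarrow> 'a) set \<Rightarrow> ((nat \<Rightarrow> 'a) \<Rightarrow> real) \<Rightarrow> 'a list \<Rightarrow> nat" where
  "mmx X g s = (GREATEST m. m \<le> length s \<and> (\<forall>j\<le>m. \<forall>k\<le>m. \<bar>hval X g (epsm j) s - hval X g (epsm k) s\<bar> \<le> epsm j + epsm k))"

definition uval :: "(nat \<Rightarrow> 'a) set \<Rightarrow> ((nat \<Rightarrow> 'a) \<Rightarrow> real) \<Rightarrow> 'a list \<Rightarrow> real" where
  "uval X g s = hval X g (epsm (mmx X g s)) s"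

lemma epsm_pos: "epsm m > 0" unfolding epsm_def by simp
lemma epsm_mono: "m \<le> M \<Longrightarrow> epsm M \<le> epsm m" unfolding epsm_def by (simp add: frac_le)

lemma uval_conv:
  assumes conv: "\<And>m. \<exists>N. \<forall>t\<ge>N. \<bar>hval X g (epsm m) (prefix_seq x t) - g x\<bar> \<le> epsm m"
  shows "(\<lambda>t. uval X g (prefix_seq x (Suc t))) \<longlonglongrightarrow> g x"
proof (rule LIMSEQ_I)
  fix r :: real assume r: "r > 0"
  define H where "H j s = hval X g (epsm j) s" for j s
  define M where "M = nat \<lceil>3 / r\<rceil>"
  have "real M \<ge> 3 / r" unfolding M_def by linarith
  then have "real M + 1 > 3 / r" by linarith
  then have "3 < (real M + 1) * r" using r by (simp add: field_simps)
  then have eM: "3 * epsm M < r" unfolding epsm_def using r by (simp add: field_simps)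
  have fin: "\<exists>N. \<forall>j\<le>M'. \<forall>t\<ge>N. \<bar>H j (prefix_seq x t) - g x\<bar> \<le> epsm j" for M'
  proof (induction M')
    case 0 then show ?case using conv[of 0] unfolding H_def by auto
  next
    case (Suc M')
    then obtain N1 where N1: "\<forall>j\<le>M'. \<forall>t\<ge>N1. \<bar>H j (prefix_seq x t) - g x\<bar> \<le> epsm j" by blast
    obtain N2 where N2: "\<forall>t\<ge>N2. \<bar>H (Suc M') (prefix_seq x t) - g x\<bar> \<le> epsm (Suc M')"
      using conv[of "Suc M'"] unfolding H_def by blast
    show ?case
    proof (intro exI allI impI)
      fix j t assume "j \<le> Suc M'" "max N1 N2 \<le> t"
      then consider "j \<le> M'" "N1 \<le> t" | "j = Suc M'" "N2 \<le> t" by linarith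
      then show "\<bar>H j (prefix_seq x t) - g x\<bar> \<le> epsm j"
      proof cases
        case 1 then show ?thesis using N1 by blast
      next
        case 2 then show ?thesis using N2 by blast
      qed
    qed
  qed
  obtain N where N: "\<forall>j\<le>M. \<forall>t\<ge>N. \<bar>H j (prefix_seq x t) - g x\<bar> \<le> epsm j" using fin by blast
  show "\<exists>no. \<forall>n\<ge>no. norm (uval X g (prefix_seq x (Suc n)) - g x) < r"
  proof (intro exI allI impI)
    fix n assume n: "max N M \<le> n"
    define s where "s = prefix_seq x (Suc n)"
    define Q where "Q m = (m \<le> length s \<and> (\<forall>j\<le>m. \<forall>k\<le>m. \<bar>H j s - H k s\<bar> \<le> epsm j + epsm k))" for m
    have close: "\<bar>H j s - g x\<bar> \<le> epsm j" if "j \<le> M" for j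
    proof -
      have "N \<le> Suc n" using n by simp
      then show ?thesis using N that unfolding s_def by blast
    qed
    have QM: "Q M"
      unfolding Q_def
    proof (intro conjI allI impI)
      show "M \<le> length s" using n unfolding s_def by simp
      fix j k assume "j \<le> M" "k \<le> M"
      then show "\<bar>H j s - H k s\<bar> \<le> epsm j + epsm k" using close[of j] close[of k] by linarith
    qed
    have bnd: "Q m \<Longrightarrow> m \<le> length s" for m unfolding Q_def by simp
    have mm: "mmx X g s = Greatest Q" unfolding mmx_def Q_def H_def ..
    have Qg: "Q (Greatest Q)" using GreatestI_nat[of Q M, OF QM bnd] .
    have Mg: "M \<le> Greatest Q" using Greatest_le_nat[of Q M, OF QM bnd] .
    have QQ: "\<forall>j\<le>Greatest Q. \<forall>k\<le>Greatest Q. \<bar>H j s - H k s\<bar> \<le> epsm j + epsm k"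
      using Qg unfolding Q_def by (rule conjunct2)
    have "\<bar>H (Greatest Q) s - H M s\<bar> \<le> epsm (Greatest Q) + epsm M" using QQ Mg by simp
    moreover have "epsm (Greatest Q) \<le> epsm M" using Mg by (rule epsm_mono)
    moreover have "\<bar>H M s - g x\<bar> \<le> epsm M" using close by simp
    ultimately have "\<bar>H (Greatest Q) s - g x\<bar> \<le> 3 * epsm M" by linarith
    then have "\<bar>uval X g s - g x\<bar> < r" unfolding uval_def mm H_def using eM by linarith
    then show "norm (uval X g (prefix_seq x (Suc n)) - g x) < r" unfolding s_def by simp
  qed
qed

lemma II_wins_lemma:
  assumes nob: "\<not> obstr T f"
  shows "winning_II T f (\<lambda>xs vws. (tan (uval (branches T) (\<lambda>x. arctan (f x)) xs), tan (uval (branches T) (\<lambda>x. arctan (f x)) xs)))"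
  unfolding winning_II_def
proof (intro allI impI)
  fix x vw
  assume x: "x \<in> branches T"
  define g where "g x = arctan (f x)" for x
  define X where "X = branches T"
  assume c: "\<forall>t. vw t = (tan (uval (branches T) (\<lambda>x. arctan (f x)) (prefix_seq x (Suc t))), tan (uval (branches T) (\<lambda>x. arctan (f x)) (prefix_seq x (Suc t))))"
  have frag: "\<forall>P. P \<subseteq> X \<and> P \<noteq> {} \<longrightarrow> (\<exists>x\<in>P. \<exists>n. spread_ok g (epsm m) P x n)" for m
    using frag_lemma[OF nob epsm_pos] unfolding X_def g_def by blast
  have "(\<lambda>t. uval X g (prefix_seq x (Suc t))) \<longlonglongrightarrow> g x"
    by (rule uval_conv, rule hval_conv[OF frag]) (use x X_def in simp)
  then have "(\<lambda>t. tan (uval X g (prefix_seq x (Suc t)))) \<longlonglongrightarrow> tan (g x)"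
    by (rule isCont_tendsto_compose[rotated]) (simp add: isCont_tan g_def)
  then have L: "(\<lambda>t. tan (uval X g (prefix_seq x (Suc t)))) \<longlonglongrightarrow> f x"
    unfolding g_def by (simp add: tan_arctan)
  have v: "fst (vw t) = tan (uval X g (prefix_seq x (Suc t)))" "snd (vw t) = tan (uval X g (prefix_seq x (Suc t)))" for t
    using c[rule_format, of t] unfolding X_def g_def by simp_all
  have L1: "(\<lambda>t. ereal (fst (vw t))) \<longlonglongrightarrow> ereal (f x)" unfolding v using L by (rule tendsto_ereal)
  have L2: "(\<lambda>t. ereal (snd (vw t))) \<longlonglongrightarrow> ereal (f x)" unfolding v using L by (rule tendsto_ereal)
  show "II_wins f x vw" unfolding II_wins_def
    using lim_imp_Limsup[OF trivial_limit_sequentially L1] lim_imp_Liminf[OF trivial_limit_sequentially L2] by simp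
qed

theorem mainTheorem18:
  fixes A :: "'a set" and T :: "'a list set" and f :: "(nat \<Rightarrow> 'a) \<Rightarrow> real"
  assumes "countable A" and "A \<noteq> {}"
    and "pruned_tree A T"
  shows "determined_Gamma' T f"
proof (cases "obstr T f")
  case True
  then obtain P \<alpha> \<beta> where "P \<subseteq> branches T" "P \<noteq> {}" "\<alpha> < \<beta>" "dense_in P {y. f y < \<alpha>}" "dense_in P {y. f y > \<beta>}"
    unfolding obstr_def by blast
  then show ?thesis unfolding determined_Gamma'_def using I_wins by blast
next
  case False
  then show ?thesis unfolding determined_Gamma'_def using II_wins_lemma by blast
qed


end
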